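(* For $n\geqslant 3$ let $M_n$ be the maximum, over all pairs $(G,S)$ of caterpillar trees with $n$ leaves bijectively labeled by the same label set and with $G$ and $S$ of different labeled topologies, of the number of coalescent histories for $(G,S)$. Then $M_n\sim C_{n-1}$ as $n\to\infty$, where $C_m=\frac{1}{m+1}\binom{2m}{m}$.
   Context: All trees are binary, rooted, leaf-labeled. A caterpillar tree is one in which some internal node is descended from all other internal nodes. For a caterpillar with $n$ leaves, internal nodes are numbered $1,\dots,n-1$ from the cherry (internal node with exactly two descendant leaves) to the root, and internal edge $i$ is the edge immediately above node $i$, with an extra edge $n-1$ above the root. A coalescent history for a gene tree $G$ and species tree $S$ is a map $h$ from internal nodes of $G$ to internal edges of $S$ such that (1) every label of a leaf below node $v$ of $G$ labels a leaf of $S$ below edge $h(v)$, and (2) if $v_2$ is descended from $v_1$ in $G$ then $h(v_2)$ is descended from $h(v_1)$ in $S$ (objects are descended from themselves). $a_n\sim b_n$ means $a_n/b_n\to 1$. *)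

theory Defs
  imports Complex_Main "HOL-Library.FuncSet"
begin

text \<open>A caterpillar tree with n leaves labelled bijectively by {0..<n} is encoded by a
  list \<sigma> listing all labels: \<sigma>!0 and \<sigma>!1 are the two leaves of the cherry (internal node 1),
  and for k \<ge> 2 the leaf \<sigma>!k is the leaf child of internal node k.  Internal nodes are
  numbered 1..n-1 from the cherry to the root; internal node i has descendant leaf set
  set (take (i+1) \<sigma>).  Internal edge i lies immediately above node i (edge n-1 above root),
  so the leaves below edge i are those below node i, and node/edge j is descended from
  node/edge i iff j \<le> i.\<close>

definition caterpillars :: "nat \<Rightarrow> nat list set" where
  "caterpillars n = {\<sigma>. distinct \<sigma> \<and> set \<sigma> = {..<n}}"

definition cat_clade :: "nat list \<Rightarrow> nat \<Rightarrow> nat set" where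
  "cat_clade \<sigma> i = set (take (i + 1) \<sigma>)"

definition same_topology :: "nat \<Rightarrow> nat list \<Rightarrow> nat list \<Rightarrow> bool" where
  "same_topology n G S \<longleftrightarrow> (\<forall>i\<in>{1..n-1}. cat_clade G i = cat_clade S i)"

definition coalescent_history :: "nat \<Rightarrow> nat list \<Rightarrow> nat list \<Rightarrow> (nat \<Rightarrow> nat) \<Rightarrow> bool" where
  "coalescent_history n G S h \<longleftrightarrow>
     (\<forall>v\<in>{1..n-1}. cat_clade G v \<subseteq> cat_clade S (h v)) \<and>
     (\<forall>v1\<in>{1..n-1}. \<forall>v2\<in>{1..n-1}. v2 \<le> v1 \<longrightarrow> h v2 \<le> h v1)"

definition num_histories :: "nat \<Rightarrow> nat list \<Rightarrow> nat list \<Rightarrow> nat" where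
  "num_histories n G S =
     card {h \<in> {1..n-1} \<rightarrow>\<^sub>E {1..n-1}. coalescent_history n G S h}"

definition max_histories :: "nat \<Rightarrow> nat" where
  "max_histories n = Max {num_histories n G S | G S.
      G \<in> caterpillars n \<and> S \<in> caterpillars n \<and> \<not> same_topology n G S}"

definition catalan :: "nat \<Rightarrow> real" where
  "catalan m = real ((2 * m) choose m) / real (m + 1)"

end

theory Submission
  imports Defs "HOL-Real_Asymp.Real_Asymp"
begin


definition ballot :: "nat \<Rightarrow> nat \<Rightarrow> (nat \<Rightarrow> nat) set" where
"ballot L T = {h \<in> {1..L} \<rightarrow>\<^sub>E {1..T}. (\<forall>v\<in>{1..L}. v \<le> h v) \<and>
   (\<forall>v1\<in>{1..L}. \<forall>v2\<in>{1..L}. v2 \<le> v1 \<longrightarrow> h v2 \<le> h v1)}"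

lemma finite_ballot: "finite (ballot L T)"
  by (rule finite_subset[of _ "{1..L} \<rightarrow>\<^sub>E {1..T}"]) (auto simp: ballot_def finite_PiE)

lemma ballot_0: "ballot 0 T = {\<lambda>_. undefined}"
  by (auto simp: ballot_def)

lemma ballot_empty: "ballot (Suc T) T = {}"
proof -
  { fix h assume "h \<in> ballot (Suc T) T"
    then have "Suc T \<le> h (Suc T)" "h (Suc T) \<in> {1..T}" by (auto simp: ballot_def PiE_def Pi_def)
    then have False by auto }
  then show ?thesis by blast
qed

lemma ballot_low: "1 \<le> L \<Longrightarrow> L \<le> T \<Longrightarrow> {h \<in> ballot L T. h L < T} = ballot L (T - 1)"
proof (intro equalityI subsetI)
  fix h assume L: "1 \<le> L" "L \<le> T" and h: "h \<in> {h \<in> ballot L T. h L < T}"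
  then have "\<forall>v\<in>{1..L}. h v \<le> h L" by (auto simp: ballot_def)
  with h show "h \<in> ballot L (T - 1)" by (fastforce simp: ballot_def PiE_def Pi_def)
next
  fix h assume L: "1 \<le> L" "L \<le> T" and h: "h \<in> ballot L (T - 1)"
  then have "h L \<in> {1..T-1}" by (auto simp: ballot_def PiE_def Pi_def)
  with h L show "h \<in> {h \<in> ballot L T. h L < T}" by (fastforce simp: ballot_def PiE_def Pi_def)
qed

lemma ballot_high: "1 \<le> L \<Longrightarrow> L \<le> T \<Longrightarrow> {h \<in> ballot L T. h L = T} = (\<lambda>g. g(L := T)) ` ballot (L - 1) T"
proof (intro equalityI subsetI)
  fix h assume L: "1 \<le> L" "L \<le> T" and h: "h \<in> {h \<in> ballot L T. h L = T}"
  define g where "g = h(L := undefined)"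
  have "h = g(L := T)" using h by (auto simp: g_def)
  moreover have "g \<in> ballot (L - 1) T" using h L
    by (auto simp: g_def ballot_def PiE_def Pi_def extensional_def)
  ultimately show "h \<in> (\<lambda>g. g(L := T)) ` ballot (L - 1) T" by blast
next
  fix h assume L: "1 \<le> L" "L \<le> T" and h: "h \<in> (\<lambda>g. g(L := T)) ` ballot (L - 1) T"
  then obtain g where g: "g \<in> ballot (L - 1) T" and hg: "h = g(L := T)" by blast
  have "\<forall>v\<in>{1..L-1}. g v \<le> T" using g by (auto simp: ballot_def PiE_def Pi_def)
  then show "h \<in> {h \<in> ballot L T. h L = T}" using g L unfolding hg
    by (auto simp: ballot_def PiE_def Pi_def extensional_def)
qed

lemma ballot_rec: assumes "1 \<le> L" "L \<le> T"
  shows "card (ballot L T) = card (ballot L (T - 1)) + card (ballot (L - 1) T)"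
proof -
  have "ballot L T = {h \<in> ballot L T. h L < T} \<union> {h \<in> ballot L T. h L = T}"
  proof (intro equalityI subsetI)
    fix h assume "h \<in> ballot L T"
    then have "h L \<le> T" using assms by (auto simp: ballot_def PiE_def Pi_def)
    then show "h \<in> {h \<in> ballot L T. h L < T} \<union> {h \<in> ballot L T. h L = T}"
      using \<open>h \<in> ballot L T\<close> by auto
  qed auto
  then have "card (ballot L T) = card {h \<in> ballot L T. h L < T} + card {h \<in> ballot L T. h L = T}"
    by (subst card_Un_disjoint[symmetric]) (auto intro: finite_subset[OF _ finite_ballot])
  moreover have "inj_on (\<lambda>g. g(L := T)) (ballot (L - 1) T)"
  proof (rule inj_onI)
    fix g1 g2 assume "g1 \<in> ballot (L - 1) T" "g2 \<in> ballot (L - 1) T" "g1(L := T) = g2(L := T)"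
    moreover have "g1 L = undefined" "g2 L = undefined" using calculation(1,2) assms
      by (auto simp: ballot_def PiE_def extensional_def)
    ultimately show "g1 = g2" by (metis fun_upd_triv fun_upd_upd)
  qed
  ultimately show ?thesis using ballot_low[OF assms] ballot_high[OF assms] by (simp add: card_image)
qed

definition bf :: "nat \<Rightarrow> nat \<Rightarrow> int" where
  "bf L T = int ((T + L) choose L) - (if L = 0 then 0 else int ((T + L) choose (L - 1)))"

lemma card_ballot: "L \<le> T + 1 \<Longrightarrow> int (card (ballot L T)) = bf L T"
proof (induction "L + T" arbitrary: L T rule: less_induct)
  case less
  show ?case
  proof (cases "L = 0")
    case True then show ?thesis by (simp add: ballot_0 bf_def)
  next
    case L0: False
    show ?thesis
    proof (cases "L = T + 1")
      case True
      have "(T + L choose L) = (T + L choose (T + L - L))"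
        by (rule binomial_symmetric) simp
      also have "T + L - L = L - 1" using True by simp
      finally show ?thesis using True by (simp add: ballot_empty bf_def)
    next
      case False
      then have LT: "1 \<le> L" "L \<le> T" using less.prems L0 by auto
      have IH1: "int (card (ballot L (T - 1))) = bf L (T - 1)" using less.hyps[of L "T - 1"] LT by simp
      have IH2: "int (card (ballot (L - 1) T)) = bf (L - 1) T" using less.hyps[of "L - 1" T] LT by simp
      define M where "M = T + L - 1"
      have M: "T + L = Suc M" using LT by (simp add: M_def)
      define K where "K = L - 1"
      have K: "L = Suc K" using LT by (simp add: K_def)
      have e1: "T - 1 + L = M" "T + (L - 1) = M" using LT by (auto simp: M_def)
      have p1: "(Suc M choose Suc K) = (M choose K) + (M choose Suc K)" by simp
      have "bf L T = int ((T+L) choose L) - int ((T+L) choose (L-1))" using L0 by (simp add: bf_def)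
      also have "\<dots> = int (Suc M choose Suc K) - int (Suc M choose K)" unfolding M unfolding K by simp
      finally have b1: "bf L T = int (Suc M choose Suc K) - int (Suc M choose K)" .
      have "bf L (T - 1) = int ((T-1+L) choose L) - int ((T-1+L) choose (L-1))" using L0 by (simp add: bf_def)
      also have "\<dots> = int (M choose Suc K) - int (M choose K)" unfolding e1 unfolding K by simp
      finally have b2: "bf L (T - 1) = int (M choose Suc K) - int (M choose K)" .
      have "int (card (ballot L T)) = bf L (T - 1) + bf (L - 1) T"
        unfolding ballot_rec[OF LT] of_nat_add IH1 IH2 ..
      also have "\<dots> = bf L T"
      proof (cases "K = 0")
        case True
        have "bf (L - 1) T = 1" using True K by (simp add: bf_def)
        then show ?thesis unfolding b1 b2 using True by (simp only: b1 b2 p1 of_nat_add) (simp add: \<open>K = 0\<close>)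
      next
        case False
        have p2: "(Suc M choose K) = (M choose (K - 1)) + (M choose K)"
          using False by (cases K) simp_all
        have "bf (L - 1) T = int ((T+(L-1)) choose (L-1)) - int ((T+(L-1)) choose (L-1-1))" using False K by (simp add: bf_def)
        also have "\<dots> = int (M choose K) - int (M choose (K - 1))" unfolding e1 unfolding K by simp
        finally have "bf (L - 1) T = int (M choose K) - int (M choose (K - 1))" .
        then show ?thesis unfolding b1 b2 p1 p2 of_nat_add by linarith
      qed
      finally show ?thesis .
    qed
  qed
qed



lemma cb_rec: "Suc m * (Suc (Suc (2*m)) choose Suc m) = 2 * Suc (2*m) * (2*m choose m)"
proof -
  define A where "A = Suc (Suc (2*m)) choose Suc m"
  define B where "B = Suc (2*m) choose Suc m"
  define B' where "B' = Suc (2*m) choose m"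
  define X where "X = 2*m choose m"
  have a: "Suc m * A = Suc (Suc (2*m)) * B'"
    unfolding A_def B'_def by (rule Suc_times_binomial)
  have b: "Suc m * B = Suc (2*m) * X"
    unfolding B_def X_def by (rule Suc_times_binomial)
  have "Suc m * (Suc (m + m) choose Suc m) = Suc m * (Suc (m + m) choose m)"
    by (rule Suc_times_binomial_add)
  then have "(Suc (m + m) choose Suc m) = (Suc (m + m) choose m)"
    using mult_cancel1[of "Suc m"] by (metis nat.distinct(1))
  then have "B = B'" unfolding B_def B'_def mult_2 .
  have "Suc m * (Suc m * A) = Suc m * (2 * Suc (2*m) * X)"
  proof -
    have "Suc m * (Suc m * A) = Suc (Suc (2*m)) * (Suc m * B)" using a \<open>B = B'\<close> by simp
    also have "\<dots> = Suc (Suc (2*m)) * (Suc (2*m) * X)" using b by simp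
    also have "\<dots> = Suc m * (2 * Suc (2*m) * X)" by simp
    finally show ?thesis .
  qed
  then have "Suc m * A = 2 * Suc (2*m) * X" by (metis mult_left_cancel nat.distinct(1))
  then show ?thesis unfolding A_def X_def .
qed

lemma cb_rec_real: "real (m + 1) * real (2*(m+1) choose (m+1)) = 2 * (2*real m+1) * real (2*m choose m)"
proof -
  have e: "2*(m+1) = Suc (Suc (2*m))" "m + 1 = Suc m" by simp_all
  have "real (Suc m * (Suc (Suc (2*m)) choose Suc m)) = real (2 * Suc (2*m) * (2*m choose m))"
    using cb_rec by metis
  then show ?thesis unfolding e of_nat_mult by simp
qed

lemma cb_upper: "real (2*m choose m) ^ 2 * (3 * real m + 1) \<le> 16 ^ m"
proof (induction m)
  case 0 then show ?case by simp
next
  case (Suc m)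
  define x where "x = real (2*m choose m)"
  define y where "y = real (2*(Suc m) choose (Suc m))"
  have r: "real (m+1) * y = 2 * (2*real m+1) * x" using cb_rec_real[of m] by (simp add: x_def y_def)
  have IH: "x^2 * (3 * real m + 1) \<le> 16^m" using Suc.IH by (simp add: x_def)
  have poly: "(2*real m+1)^2 * (3*real m+4) \<le> 4 * (real m+1)^2 * (3*real m+1)"
    by (simp add: power2_eq_square algebra_simps)
  have "(real m + 1)^2 * (y^2 * (3 * real (Suc m) + 1)) = (real (m+1) * y)^2 * (3*real m+4)"
    by (simp add: power2_eq_square algebra_simps)
  also have "\<dots> = 4 * x^2 * ((2*real m+1)^2 * (3*real m+4))" unfolding r by (simp add: power2_eq_square algebra_simps)
  also have "\<dots> \<le> 4 * x^2 * (4 * (real m+1)^2 * (3*real m+1))"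
    by (rule mult_left_mono[OF poly]) simp
  also have "\<dots> = 16 * (real m + 1)^2 * (x^2 * (3 * real m + 1))" by (simp add: algebra_simps)
  also have "\<dots> \<le> 16 * (real m + 1)^2 * 16^m"
    by (rule mult_left_mono[OF IH]) simp
  also have "\<dots> = (real m + 1)^2 * 16^(Suc m)" by simp
  finally have "(real m + 1)^2 * (y^2 * (3 * real (Suc m) + 1)) \<le> (real m + 1)^2 * 16^(Suc m)" .
  then have "y^2 * (3 * real (Suc m) + 1) \<le> 16^(Suc m)"
    by (rule mult_left_le_imp_le) (simp add: add_pos_nonneg)
  then show ?case by (simp add: y_def)
qed

lemma cb_lower: "m \<ge> 1 \<Longrightarrow> 16 ^ m \<le> real (2*m choose m) ^ 2 * (4 * real m)"
proof (induction m rule: dec_induct)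
  case base then show ?case by (simp add: numeral_eq_Suc)
next
  case (step m)
  define x where "x = real (2*m choose m)"
  define y where "y = real (2*(Suc m) choose (Suc m))"
  have r: "real (m+1) * y = 2 * (2*real m+1) * x" using cb_rec_real[of m] by (simp add: x_def y_def)
  have IH: "16^m \<le> x^2 * (4 * real m)" using step.IH by (simp add: x_def)
  have poly: "4 * (real m+1)^2 * (4 * real m) \<le> (2*real m+1)^2 * (4 * (real m + 1))"
    by (simp add: power2_eq_square algebra_simps)
  have "(real m + 1)^2 * 16^(Suc m) = 16 * (real m + 1)^2 * 16^m" by simp
  also have "\<dots> \<le> 16 * (real m + 1)^2 * (x^2 * (4 * real m))"
    by (rule mult_left_mono[OF IH]) simp
  also have "\<dots> = 4 * x^2 * (4 * (real m+1)^2 * (4 * real m))" by (simp add: algebra_simps)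
  also have "\<dots> \<le> 4 * x^2 * ((2*real m+1)^2 * (4 * (real m + 1)))"
    by (rule mult_left_mono[OF poly]) simp
  also have "\<dots> = (real (m+1) * y)^2 * (4 * (real m + 1))" unfolding r by (simp add: power2_eq_square algebra_simps)
  also have "\<dots> = (real m + 1)^2 * (y^2 * (4 * real (Suc m)))"
    by (simp add: power2_eq_square algebra_simps)
  finally have "(real m + 1)^2 * 16^(Suc m) \<le> (real m + 1)^2 * (y^2 * (4 * real (Suc m)))" .
  then have "16^(Suc m) \<le> y^2 * (4 * real (Suc m))"
    by (rule mult_left_le_imp_le) (simp add: add_pos_nonneg)
  then show ?case by (simp add: y_def)
qed

lemma cat_sq: "catalan m ^ 2 = real (2*m choose m) ^ 2 / (real m + 1)^2"
  by (simp add: catalan_def power_divide add.commute)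

lemma cat_upper: "catalan m ^ 2 \<le> 16 ^ m / ((real m + 1)^2 * (3 * real m + 1))"
proof -
  have p: "(3 * real m + 1) > 0" by simp
  have "catalan m ^ 2 = real (2*m choose m) ^ 2 * (3 * real m + 1) / ((real m + 1)^2 * (3 * real m + 1))"
    unfolding cat_sq using p by simp
  also have "\<dots> \<le> 16 ^ m / ((real m + 1)^2 * (3 * real m + 1))"
    by (rule divide_right_mono[OF cb_upper]) simp
  finally show ?thesis .
qed

lemma cat_lower: assumes "m \<ge> 1" shows "16 ^ m / ((real m + 1)^2 * (4 * real m)) \<le> catalan m ^ 2"
proof -
  have p: "(4 * real m) > 0" using assms by simp
  have "catalan m ^ 2 = real (2*m choose m) ^ 2 * (4 * real m) / ((real m + 1)^2 * (4 * real m))"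
    unfolding cat_sq using p by simp
  moreover have "16 ^ m / ((real m + 1)^2 * (4 * real m)) \<le> real (2*m choose m) ^ 2 * (4 * real m) / ((real m + 1)^2 * (4 * real m))"
    by (rule divide_right_mono[OF cb_lower[OF assms]]) simp
  ultimately show ?thesis by simp
qed

lemma cat_pos: "catalan m > 0"
  by (simp add: catalan_def)



lemma card_ballot_cat: "real (card (ballot m m)) = catalan m"
proof (cases m)
  case 0 then show ?thesis by (simp add: ballot_0 catalan_def)
next
  case (Suc k)
  have i: "int (card (ballot m m)) = int (2*m choose m) - int (2*m choose k)"
    using card_ballot[of m m] Suc by (simp add: bf_def mult_2)
  have "Suc k * (Suc (k + Suc k) choose Suc k) = Suc (Suc k) * (Suc (k + Suc k) choose k)"
    by (rule Suc_times_binomial_add)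
  moreover have "Suc (k + Suc k) = 2*m" using Suc by simp
  ultimately have e: "real m * real (2*m choose m) = real (m+1) * real (2*m choose k)"
    using Suc by (metis of_nat_mult Suc_eq_plus1)
  have r: "real (card (ballot m m)) = real (2*m choose m) - real (2*m choose k)"
    using arg_cong[OF i, of real_of_int] by simp
  have "real (2*m choose k) = real m * real (2*m choose m) / real (m+1)"
    using e by (simp add: field_simps)
  then show ?thesis unfolding r catalan_def by (simp add: field_simps)
qed

lemma bad_bound:
  assumes "1 \<le> p" "p \<le> N"
  shows "card {h \<in> ballot N N. h p = p} \<le> card (ballot p p) * card (ballot (N-p) (N-p))"
proof -
  define \<phi> where "\<phi> h = (restrict h {1..p}, \<lambda>u\<in>{1..N-p}. h (u+p) - p)" for h :: "nat \<Rightarrow> nat"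
  have inj: "inj_on \<phi> {h \<in> ballot N N. h p = p}"
  proof (rule inj_onI)
    fix h1 h2 assume h1: "h1 \<in> {h \<in> ballot N N. h p = p}" and h2: "h2 \<in> {h \<in> ballot N N. h p = p}"
      and eq: "\<phi> h1 = \<phi> h2"
    show "h1 = h2"
    proof
      fix v
      have "v \<in> {1..N} \<Longrightarrow> v \<in> {1..p} \<or> v \<in> {p+1..N}" by auto
      then consider "v \<in> {1..p}" | "v \<in> {p+1..N}" | "v \<notin> {1..N}" by blast
      then show "h1 v = h2 v"
      proof cases
        case 1
        have "restrict h1 {1..p} = restrict h2 {1..p}" using eq by (simp add: \<phi>_def)
        from fun_cong[OF this, of v] show ?thesis using 1 by simp
      next
        case 2
        then have u: "v - p \<in> {1..N-p}" by auto
        have "(\<lambda>u\<in>{1..N-p}. h1 (u+p) - p) = (\<lambda>u\<in>{1..N-p}. h2 (u+p) - p)" using eq by (simp add: \<phi>_def)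
        from fun_cong[OF this, of "v - p"] have "h1 (v - p + p) - p = h2 (v - p + p) - p"
          using u by simp
        moreover have "v \<le> h1 v" "v \<le> h2 v" using h1 h2 2 by (auto simp: ballot_def)
        ultimately show ?thesis using 2 by auto
      next
        case 3
        then show ?thesis using h1 h2 by (auto simp: ballot_def PiE_def extensional_def)
      qed
    qed
  qed
  have img: "\<phi> ` {h \<in> ballot N N. h p = p} \<subseteq> ballot p p \<times> ballot (N-p) (N-p)"
  proof
    fix y assume "y \<in> \<phi> ` {h \<in> ballot N N. h p = p}"
    then obtain h where h: "h \<in> ballot N N" "h p = p" and y: "y = \<phi> h" by blast
    have lb: "\<And>v. v \<in> {1..N} \<Longrightarrow> v \<le> h v" and mono: "\<And>v1 v2. v1 \<in> {1..N} \<Longrightarrow> v2 \<in> {1..N} \<Longrightarrow> v2 \<le> v1 \<Longrightarrow> h v2 \<le> h v1"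
      and rng: "\<And>v. v \<in> {1..N} \<Longrightarrow> h v \<in> {1..N}"
      using h unfolding ballot_def by (auto simp: PiE_def Pi_def)
    have "restrict h {1..p} \<in> ballot p p"
      unfolding ballot_def
    proof (intro CollectI conjI ballI impI)
      show "restrict h {1..p} \<in> {1..p} \<rightarrow>\<^sub>E {1..p}"
      proof (rule restrict_PiE_iff[THEN iffD2], intro ballI)
        fix v assume v: "v \<in> {1..p}"
        have "h v \<le> h p" using mono[of p v] v assms by auto
        then show "h v \<in> {1..p}" using lb[of v] v assms h(2) by auto
      qed
    next
      fix v assume "v \<in> {1..p}" then show "v \<le> restrict h {1..p} v" using lb[of v] assms by auto
    next
      fix v1 v2 assume "v1 \<in> {1..p}" "v2 \<in> {1..p}" "v2 \<le> v1"
      then show "restrict h {1..p} v2 \<le> restrict h {1..p} v1" using mono[of v1 v2] assms by auto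
    qed
    moreover have "(\<lambda>u\<in>{1..N-p}. h (u+p) - p) \<in> ballot (N-p) (N-p)"
      unfolding ballot_def
    proof (intro CollectI conjI ballI impI)
      show "(\<lambda>u\<in>{1..N-p}. h (u+p) - p) \<in> {1..N-p} \<rightarrow>\<^sub>E {1..N-p}"
      proof (rule restrict_PiE_iff[THEN iffD2], intro ballI)
        fix u assume u: "u \<in> {1..N-p}"
        then have "u + p \<in> {1..N}" using assms by auto
        then have "u + p \<le> h (u+p)" "h (u+p) \<le> N" using lb[of "u+p"] rng[of "u+p"] by auto
        then show "h (u+p) - p \<in> {1..N-p}" using u by auto
      qed
    next
      fix u assume u: "u \<in> {1..N-p}"
      then have "u + p \<in> {1..N}" using assms by auto
      then have "u + p \<le> h (u+p)" using lb[of "u+p"] by auto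
      then show "u \<le> (\<lambda>u\<in>{1..N-p}. h (u+p) - p) u" using u by auto
    next
      fix v1 v2 assume "v1 \<in> {1..N-p}" "v2 \<in> {1..N-p}" "v2 \<le> v1"
      then show "(\<lambda>u\<in>{1..N-p}. h (u+p) - p) v2 \<le> (\<lambda>u\<in>{1..N-p}. h (u+p) - p) v1"
      proof -
        have "v1 + p \<le> N" "1 \<le> v2" using \<open>v1 \<in> {1..N-p}\<close> \<open>v2 \<in> {1..N-p}\<close> assms by auto
        then have "h (v2 + p) \<le> h (v1 + p)" using mono[of "v1+p" "v2+p"] \<open>v2 \<le> v1\<close> by auto
        then show ?thesis using \<open>v1 \<in> {1..N-p}\<close> \<open>v2 \<in> {1..N-p}\<close> by auto
      qed
    qed
    ultimately show "y \<in> ballot p p \<times> ballot (N-p) (N-p)" unfolding y \<phi>_def by simp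
  qed
  have "card {h \<in> ballot N N. h p = p} = card (\<phi> ` {h \<in> ballot N N. h p = p})"
    using inj by (simp add: card_image)
  also have "\<dots> \<le> card (ballot p p \<times> ballot (N-p) (N-p))"
    by (rule card_mono[OF _ img]) (simp add: finite_ballot)
  finally show ?thesis by (simp add: card_cartesian_product)
qed



definition aa :: "real \<Rightarrow> real" where "aa t = (t+1)^2 * (3*t+1)"

lemma aa_mono: "1 \<le> r \<Longrightarrow> r \<le> s \<Longrightarrow> aa r \<le> aa s"
  unfolding aa_def by (intro mult_mono power_mono) auto

lemma aa_pos: "0 \<le> r \<Longrightarrow> aa r > 0"
  unfolding aa_def by (intro mult_pos_pos) auto

lemma x_bound:
  assumes n: "n \<ge> 4"
  shows "(catalan (n div 2) * catalan (n - 1 - n div 2) / catalan (n - 1))^2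
          \<le> 4 * real n ^ 3 / (aa (real n / 2 - 1))^2"
proof -
  define p where "p = n div 2"
  define q where "q = n - 1 - n div 2"
  define N where "N = n - 1"
  define r where "r = real n / 2 - 1"
  have pq: "p + q = N" "p \<ge> 1" "q \<ge> 1" "N \<ge> 1" using n by (auto simp: p_def q_def N_def)
  have rp: "r \<le> real p" "r \<le> real q" "1 \<le> r"
    using n unfolding r_def p_def q_def by (auto simp: of_nat_diff)
  have cp: "catalan p ^ 2 \<le> 16^p / aa (real p)" using cat_upper[of p] by (simp add: aa_def)
  have cq: "catalan q ^ 2 \<le> 16^q / aa (real q)" using cat_upper[of q] by (simp add: aa_def)
  have cN: "16^N / ((real N + 1)^2 * (4 * real N)) \<le> catalan N ^ 2" using cat_lower[of N] pq by simp
  have pos1: "0 < 16^N / ((real N + 1)^2 * (4 * real N))" using pq by simp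
  have "(catalan p * catalan q / catalan N)^2 = catalan p ^ 2 * catalan q ^ 2 / catalan N ^ 2"
    by (simp add: power_mult_distrib power_divide)
  also have "\<dots> \<le> (16^p / aa (real p) * (16^q / aa (real q))) / (16^N / ((real N + 1)^2 * (4 * real N)))"
  proof -
    have ap: "aa (real p) > 0" "aa (real q) > 0" by (auto intro: aa_pos)
    have m: "catalan p ^ 2 * catalan q ^ 2 \<le> 16^p / aa (real p) * (16^q / aa (real q))"
      by (rule mult_mono[OF cp cq]) (use ap in auto)
    have y: "0 \<le> 16^p / aa (real p) * (16^q / aa (real q))" using ap by simp
    show ?thesis by (rule frac_le[OF y m pos1 cN])
  qed
  also have "\<dots> = ((real N + 1)^2 * (4 * real N)) / (aa (real p) * aa (real q))"
  proof -
    have "(16::real)^p * 16^q = 16^N" using pq by (metis power_add)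
    moreover have "aa (real p) > 0" "aa (real q) > 0" by (auto intro: aa_pos)
    ultimately show ?thesis using pq by (simp add: field_simps)
  qed
  also have "\<dots> \<le> 4 * real n ^ 3 / (aa r * aa r)"
  proof (rule frac_le)
    have "real N + 1 = real n" "real N \<le> real n" using n by (auto simp: N_def)
    then show "(real N + 1)^2 * (4 * real N) \<le> 4 * real n ^ 3"
      by (simp add: power2_eq_square power3_eq_cube mult_left_mono)
    show "0 < aa r * aa r" using rp aa_pos[of r] by simp
    show "aa r * aa r \<le> aa (real p) * aa (real q)"
      using rp aa_pos[of r] aa_pos[of "real p"] by (intro mult_mono aa_mono) auto
  qed simp
  finally show ?thesis by (simp add: p_def q_def N_def r_def power2_eq_square)
qed

lemma x_lim: "(\<lambda>n. catalan (n div 2) * catalan (n - 1 - n div 2) / catalan (n - 1)) \<longlonglongrightarrow> 0"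
proof (rule tendsto_sandwich[of "\<lambda>_. 0" _ sequentially "\<lambda>n. sqrt (4 * real n ^ 3 / (aa (real n / 2 - 1))^2)"])
  show "\<forall>\<^sub>F n in sequentially. 0 \<le> catalan (n div 2) * catalan (n - 1 - n div 2) / catalan (n - 1)"
    by (auto intro!: always_eventually simp: catalan_def)
  show "\<forall>\<^sub>F n in sequentially. catalan (n div 2) * catalan (n - 1 - n div 2) / catalan (n - 1)
      \<le> sqrt (4 * real n ^ 3 / (aa (real n / 2 - 1))^2)"
    using eventually_ge_at_top[of 4]
    by eventually_elim (rule real_le_rsqrt[OF x_bound], simp)
  show "((\<lambda>_. 0) \<longlongrightarrow> (0::real)) sequentially" by simp
  have "(\<lambda>n. 4 * real n ^ 3 / (aa (real n / 2 - 1))^2) \<longlonglongrightarrow> 0"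
    unfolding aa_def by real_asymp
  from tendsto_real_sqrt[OF this] show "(\<lambda>n. sqrt (4 * real n ^ 3 / (aa (real n / 2 - 1))^2)) \<longlonglongrightarrow> 0" by simp
qed



lemma cat_len: "\<sigma> \<in> caterpillars n \<Longrightarrow> length \<sigma> = n"
  unfolding caterpillars_def by (metis (mono_tags, lifting) card_lessThan distinct_card mem_Collect_eq)

lemma card_clade: "\<sigma> \<in> caterpillars n \<Longrightarrow> i < n \<Longrightarrow> card (cat_clade \<sigma> i) = i + 1"
  unfolding cat_clade_def
  by (subst distinct_card) (auto simp: caterpillars_def cat_len[of \<sigma> n] distinct_take)

lemma card_clade_le: "card (cat_clade \<sigma> i) \<le> i + 1"
  unfolding cat_clade_def by (metis card_length length_take min.bounded_iff nle_le)

lemma hist_sub: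
  assumes G: "G \<in> caterpillars n" and S: "S \<in> caterpillars n"
  shows "{h \<in> {1..n-1} \<rightarrow>\<^sub>E {1..n-1}. coalescent_history n G S h} \<subseteq> ballot (n-1) (n-1)"
proof
  fix h assume h: "h \<in> {h \<in> {1..n-1} \<rightarrow>\<^sub>E {1..n-1}. coalescent_history n G S h}"
  have "\<forall>v\<in>{1..n-1}. v \<le> h v"
  proof
    fix v assume v: "v \<in> {1..n-1}"
    then have sub: "cat_clade G v \<subseteq> cat_clade S (h v)" using h by (auto simp: coalescent_history_def)
    have "v + 1 = card (cat_clade G v)" using card_clade[OF G, of v] v by auto
    also have "\<dots> \<le> card (cat_clade S (h v))" by (rule card_mono[OF _ sub]) (simp add: cat_clade_def)
    also have "\<dots> \<le> h v + 1" by (rule card_clade_le)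
    finally show "v \<le> h v" by simp
  qed
  then show "h \<in> ballot (n-1) (n-1)" using h by (auto simp: ballot_def coalescent_history_def)
qed

lemma num_le: "G \<in> caterpillars n \<Longrightarrow> S \<in> caterpillars n \<Longrightarrow> num_histories n G S \<le> card (ballot (n-1) (n-1))"
  unfolding num_histories_def by (rule card_mono[OF finite_ballot hist_sub])

definition tau :: "nat \<Rightarrow> nat \<Rightarrow> nat" where
  "tau p i = (if i = p then p+1 else if i = p+1 then p else i)"

lemma tau_tau: "tau p (tau p i) = i" by (simp add: tau_def)

lemma tau_image_eq: assumes "tau p ` A \<subseteq> A" shows "tau p ` A = A"
proof
  show "A \<subseteq> tau p ` A"
  proof
    fix x assume "x \<in> A"
    then have "tau p x \<in> A" using assms by blast
    then show "x \<in> tau p ` A" using tau_tau[of p x] by (metis image_eqI)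
  qed
qed (rule assms)

lemma tau_clade: "v \<noteq> p \<Longrightarrow> tau p ` {..<v+1} = {..<v+1}"
  by (rule tau_image_eq) (auto simp: tau_def)

lemma inj_tau: "inj (tau p)"
  by (metis injI tau_tau)

lemma witness:
  assumes n: "n \<ge> 4"
  defines "p \<equiv> n div 2"
  defines "G \<equiv> map (tau p) [0..<n]"
  defines "S \<equiv> [0..<n]"
  shows "G \<in> caterpillars n" "S \<in> caterpillars n" "\<not> same_topology n G S"
    "ballot (n-1) (n-1) - {h \<in> ballot (n-1) (n-1). h p = p}
       \<subseteq> {h \<in> {1..n-1} \<rightarrow>\<^sub>E {1..n-1}. coalescent_history n G S h}"
proof -
  have p: "1 \<le> p" "p + 1 < n" using n by (auto simp: p_def)
  have tn: "tau p ` {..<n} = {..<n}" by (rule tau_image_eq) (use p in \<open>auto simp: tau_def\<close>)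
  show "G \<in> caterpillars n" unfolding G_def caterpillars_def
    using inj_tau[of p] tn by (auto simp: distinct_map inj_on_def atLeast0LessThan)
  show "S \<in> caterpillars n" unfolding S_def caterpillars_def by auto
  have cS: "cat_clade S v = {..<v+1}" if "v < n" for v
    unfolding cat_clade_def S_def using that by (auto simp: take_upt)
  have cG: "cat_clade G v = tau p ` {..<v+1}" if "v < n" for v
  proof -
    have "cat_clade G v = tau p ` set (take (v+1) [0..<n])" unfolding cat_clade_def G_def
      by (simp add: take_map)
    also have "set (take (v+1) [0..<n]) = {..<v+1}" using that by (auto simp: take_upt)
    finally show ?thesis .
  qed
  have pin: "p + 1 \<in> cat_clade G p" using cG[of p] p by (auto simp: tau_def)
  have pnot: "p + 1 \<notin> cat_clade S p" using cS[of p] p by auto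
  show "\<not> same_topology n G S" unfolding same_topology_def
    using pin pnot p by auto
  show "ballot (n-1) (n-1) - {h \<in> ballot (n-1) (n-1). h p = p}
       \<subseteq> {h \<in> {1..n-1} \<rightarrow>\<^sub>E {1..n-1}. coalescent_history n G S h}"
  proof
    fix h assume h: "h \<in> ballot (n-1) (n-1) - {h \<in> ballot (n-1) (n-1). h p = p}"
    then have hP: "h \<in> {1..n-1} \<rightarrow>\<^sub>E {1..n-1}" and lb: "\<forall>v\<in>{1..n-1}. v \<le> h v"
      and mono: "\<forall>v1\<in>{1..n-1}. \<forall>v2\<in>{1..n-1}. v2 \<le> v1 \<longrightarrow> h v2 \<le> h v1" and hp: "h p \<noteq> p"
      by (auto simp: ballot_def)
    have "cat_clade G v \<subseteq> cat_clade S (h v)" if v: "v \<in> {1..n-1}" for v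
    proof -
      have hv: "h v < n" "v \<le> h v" using hP lb v by (auto simp: PiE_def Pi_def)
      have vn: "v < n" using v by auto
      show ?thesis
      proof (cases "v = p")
        case True
        then have "p + 1 \<le> h v" using hv hp by auto
        moreover have "tau p ` {..<p+1} \<subseteq> {..<p+2}" by (auto simp: tau_def)
        moreover have "cat_clade G v = tau p ` {..<p+1}" using cG[OF vn] True by simp
        moreover have "cat_clade S (h v) = {..<h v+1}" using cS[OF hv(1)] .
        ultimately show ?thesis by auto
      next
        case False
        then show ?thesis unfolding cG[OF vn] cS[OF hv(1)] tau_clade[OF False] using hv by auto
      qed
    qed
    then show "h \<in> {h \<in> {1..n-1} \<rightarrow>\<^sub>E {1..n-1}. coalescent_history n G S h}"
      using hP mono by (auto simp: coalescent_history_def)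
  qed
qed



lemma max_bounds:
  assumes n: "n \<ge> 4"
  shows "real (max_histories n) \<le> catalan (n - 1)"
    "catalan (n - 1) - catalan (n div 2) * catalan (n - 1 - n div 2) \<le> real (max_histories n)"
proof -
  define N where "N = n - 1"
  define p where "p = n div 2"
  define G where "G = map (tau p) [0..<n]"
  define S where "S = [0..<n]"
  define M where "M = {num_histories n G S | G S.
      G \<in> caterpillars n \<and> S \<in> caterpillars n \<and> \<not> same_topology n G S}"
  note w = witness[OF n, folded p_def, folded G_def S_def]
  have Msub: "M \<subseteq> {..card (ballot N N)}"
  proof
    fix x assume "x \<in> M"
    then obtain G' S' where "x = num_histories n G' S'" "G' \<in> caterpillars n" "S' \<in> caterpillars n"
      unfolding M_def by blast
    then show "x \<in> {..card (ballot N N)}" using num_le[of G' n S'] by (simp add: N_def)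
  qed
  then have finM: "finite M" using finite_subset by blast
  have inM: "num_histories n G S \<in> M" unfolding M_def using w by blast
  have mx: "max_histories n = Max M" unfolding max_histories_def M_def ..
  have "max_histories n \<le> card (ballot N N)" unfolding mx
    using Msub inM finM by (subst Max_le_iff) auto
  then have "real (max_histories n) \<le> real (card (ballot N N))" by (simp only: of_nat_le_iff)
  then show "real (max_histories n) \<le> catalan (n - 1)"
    unfolding card_ballot_cat N_def .
  have "num_histories n G S \<le> max_histories n" unfolding mx using finM inM by simp
  have pN: "1 \<le> p" "p \<le> N" using n by (auto simp: p_def N_def)
  define bad where "bad = {h \<in> ballot N N. h p = p}"
  have "card (ballot N N - bad) \<le> num_histories n G S"
    unfolding num_histories_def
  proof (rule card_mono)
    show "finite {h \<in> {1..n - 1} \<rightarrow>\<^sub>E {1..n - 1}. coalescent_history n G S h}"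
      by (rule finite_subset[of _ "{1..n-1} \<rightarrow>\<^sub>E {1..n-1}"]) (auto simp: finite_PiE)
    show "ballot N N - bad \<subseteq> {h \<in> {1..n - 1} \<rightarrow>\<^sub>E {1..n - 1}. coalescent_history n G S h}"
      using w(4) unfolding bad_def N_def .
  qed
  moreover have "card (ballot N N - bad) = card (ballot N N) - card bad"
    by (rule card_Diff_subset) (auto simp: bad_def intro: finite_subset[OF _ finite_ballot])
  moreover have "card bad \<le> card (ballot N N)"
    by (rule card_mono[OF finite_ballot]) (auto simp: bad_def)
  ultimately have "real (card (ballot N N)) - real (card bad) \<le> real (max_histories n)"
    using \<open>num_histories n G S \<le> max_histories n\<close> by linarith
  moreover have "real (card bad) \<le> catalan p * catalan (N - p)"
  proof -
    have "real (card bad) \<le> real (card (ballot p p) * card (ballot (N-p) (N-p)))"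
      using bad_bound[OF pN] unfolding bad_def of_nat_le_iff .
    then show ?thesis by (simp only: of_nat_mult card_ballot_cat)
  qed
  ultimately show "catalan (n - 1) - catalan (n div 2) * catalan (n - 1 - n div 2) \<le> real (max_histories n)"
    using card_ballot_cat[of N] by (simp add: N_def p_def)
qed

theorem corollary3:
  shows "(\<lambda>n. real (max_histories n) / catalan (n - 1)) \<longlonglongrightarrow> 1"
proof (rule tendsto_sandwich[of "\<lambda>n. 1 - catalan (n div 2) * catalan (n - 1 - n div 2) / catalan (n - 1)" _ sequentially "\<lambda>_. 1"])
  show "\<forall>\<^sub>F n in sequentially. 1 - catalan (n div 2) * catalan (n - 1 - n div 2) / catalan (n - 1)
      \<le> real (max_histories n) / catalan (n - 1)"
    using eventually_ge_at_top[of 4]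
  proof eventually_elim
    case (elim n)
    have c: "catalan (n - 1) > 0" by (rule cat_pos)
    define a where "a = catalan (n div 2) * catalan (n - 1 - n div 2)"
    have "1 - a / catalan (n - 1) = (catalan (n - 1) - a) / catalan (n - 1)"
      using c by (simp add: diff_divide_distrib)
    also have "\<dots> \<le> real (max_histories n) / catalan (n - 1)"
      by (rule divide_right_mono) (use max_bounds(2)[OF elim] c in \<open>auto simp: a_def\<close>)
    finally show ?case unfolding a_def .
  qed
  show "\<forall>\<^sub>F n in sequentially. real (max_histories n) / catalan (n - 1) \<le> 1"
    using eventually_ge_at_top[of 4]
  proof eventually_elim
    case (elim n)
    have c: "catalan (n - 1) > 0" by (rule cat_pos)
    show ?case using max_bounds(1)[OF elim] c by simp
  qed
  show "(\<lambda>n. 1 - catalan (n div 2) * catalan (n - 1 - n div 2) / catalan (n - 1)) \<longlonglongrightarrow> 1"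
    using tendsto_diff[OF tendsto_const[of 1] x_lim] by simp
qed simp


end
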